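(* Let $G$ be a finite group with $|G'|=2$. (1) $\mathcal B(G)$ is seminormal. (2) $\mathcal C(\mathcal B(G),\mathcal F(G))$ is a Clifford semigroup. In particular, if $S\in\mathcal F(G)$ with $\pi(S)=\{g\}$ and $n=\mathrm{ord}(g)$, then $\{[S],[S^{[2]}],\ldots,[S^{[n]}]\}$ is a cyclic subgroup of $\mathcal C(\mathcal B(G),\mathcal F(G))$ of order $n$ generated by $[S]$. (3) $|\mathcal C(\mathcal B(G),\mathcal F(G))|\le|\mathsf Z(G)|+\prod_{g\in G\setminus\mathsf Z(G)}\mathrm{ord}(g)$.
   Context: Let $G$ be a finite group written multiplicatively with identity $1_G$; $G'$ is its commutator subgroup and $\mathsf Z(G)$ its center. $\mathcal F(G)$ is the free abelian monoid with basis $G$ (sequences $S=g_1\boldsymbol{\cdot}\ldots\boldsymbol{\cdot}g_\ell$, operation $\boldsymbol{\cdot}$ = concatenation, $S^{[k]}$ the $k$-fold product of $S$ with itself). $\pi(S)=\{g_{\tau(1)}\cdots g_{\tau(\ell)}:\tau\text{ a permutation of }[1,\ell]\}$, $\pi$ of the empty sequence is $\{1_G\}$, and $\mathcal B(G)=\{S\in\mathcal F(G):1_G\in\pi(S)\}$. For $S,S'\in\mathcal F(G)$, $S\sim S'$ means: for all $T\in\mathcal F(G)$, $S\boldsymbol{\cdot}T\in\mathcal B(G)\iff S'\boldsymbol{\cdot}T\in\mathcal B(G)$; this is a congruence, $[S]$ is the class of $S$, and $\mathcal C(\mathcal B(G),\mathcal F(G))$ is the set of classes, an additively written commutative semigroup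 with $[S]+[T]=[S\boldsymbol{\cdot}T]$. A monoid $H$ with quotient group $\mathsf q(H)$ is seminormal if $x\in\mathsf q(H)$ and $x^2,x^3\in H$ imply $x\in H$. A commutative semigroup is a Clifford semigroup if every element lies in some subgroup of it. *)

theory Defs
  imports "HOL-Algebra.Algebra" "HOL-Library.Multiset"
begin

definition seqs :: "('a, 'b) monoid_scheme \<Rightarrow> 'a multiset set" where
  "seqs G = {S. set_mset S \<subseteq> carrier G}"

definition seq_prods :: "('a, 'b) monoid_scheme \<Rightarrow> 'a multiset \<Rightarrow> 'a set" where
  "seq_prods G S = {foldr (\<lambda>x y. x \<otimes>\<^bsub>G\<^esub> y) xs \<one>\<^bsub>G\<^esub> | xs. mset xs = S}"

definition prod_one_seqs :: "('a, 'b) monoid_scheme \<Rightarrow> 'a multiset set" where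
  "prod_one_seqs G = {S \<in> seqs G. \<one>\<^bsub>G\<^esub> \<in> seq_prods G S}"

definition seq_equiv :: "('a, 'b) monoid_scheme \<Rightarrow> 'a multiset \<Rightarrow> 'a multiset \<Rightarrow> bool" where
  "seq_equiv G S S' \<longleftrightarrow>
     (\<forall>T \<in> seqs G. (S + T \<in> prod_one_seqs G \<longleftrightarrow> S' + T \<in> prod_one_seqs G))"

definition seq_class :: "('a, 'b) monoid_scheme \<Rightarrow> 'a multiset \<Rightarrow> 'a multiset set" where
  "seq_class G S = {S' \<in> seqs G. seq_equiv G S S'}"

definition class_semigroup :: "('a, 'b) monoid_scheme \<Rightarrow> 'a multiset set set" where
  "class_semigroup G = seq_class G ` seqs G"

definition class_add :: "('a, 'b) monoid_scheme \<Rightarrow> 'a multiset set \<Rightarrow> 'a multiset set \<Rightarrow> 'a multiset set" where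
  "class_add G U V = seq_class G ((SOME A. A \<in> U) + (SOME B. B \<in> V))"

text \<open>A submonoid H of the free abelian monoid, embedded in the free abelian group Z^(a);
  its quotient group q(H) is the group of differences a - b with a, b in H.\<close>
definition zvec :: "'a multiset \<Rightarrow> 'a \<Rightarrow> int" where
  "zvec S = (\<lambda>g. int (count S g))"

definition quot_group :: "'a multiset set \<Rightarrow> ('a \<Rightarrow> int) set" where
  "quot_group H = {(\<lambda>g. zvec a g - zvec b g) | a b. a \<in> H \<and> b \<in> H}"

text \<open>Seminormality (written additively: x^k corresponds to k*x).\<close>
definition seminormal :: "'a multiset set \<Rightarrow> bool" where
  "seminormal H \<longleftrightarrow>
     (\<forall>x \<in> quot_group H.
        (\<exists>S \<in> H. zvec S = (\<lambda>g. 2 * x g)) \<and> (\<exists>S \<in> H. zvec S = (\<lambda>g. 3 * x g))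
        \<longrightarrow> (\<exists>S \<in> H. zvec S = x))"

definition semigroup_subgroup :: "'c set \<Rightarrow> ('c \<Rightarrow> 'c \<Rightarrow> 'c) \<Rightarrow> 'c set \<Rightarrow> bool" where
  "semigroup_subgroup C f K \<longleftrightarrow>
     K \<subseteq> C \<and> (\<exists>e. group \<lparr>carrier = K, monoid.mult = f, one = e\<rparr>)"

definition clifford_semigroup :: "'c set \<Rightarrow> ('c \<Rightarrow> 'c \<Rightarrow> 'c) \<Rightarrow> bool" where
  "clifford_semigroup C f \<longleftrightarrow> (\<forall>x \<in> C. \<exists>K. semigroup_subgroup C f K \<and> x \<in> K)"

definition group_center :: "('a, 'b) monoid_scheme \<Rightarrow> 'a set" where
  "group_center G = {z \<in> carrier G. \<forall>g \<in> carrier G. z \<otimes>\<^bsub>G\<^esub> g = g \<otimes>\<^bsub>G\<^esub> z}"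

end

theory Submission
  imports Defs
begin

definition commset :: "('a, 'b) monoid_scheme \<Rightarrow> 'a set \<Rightarrow> bool" where
  "commset G A \<longleftrightarrow> (\<forall>a\<in>A. \<forall>b\<in>A. a \<otimes>\<^bsub>G\<^esub> b = b \<otimes>\<^bsub>G\<^esub> a)"

definition prodl :: "('a, 'b) monoid_scheme \<Rightarrow> 'a list \<Rightarrow> 'a" where
  "prodl G xs = foldr (\<lambda>x y. x \<otimes>\<^bsub>G\<^esub> y) xs \<one>\<^bsub>G\<^esub>"

locale G2 = group G for G (structure) +
  fixes eps
  assumes eps_carr: "eps \<in> carrier G"
    and eps_ne: "eps \<noteq> \<one>"
    and eps_sq: "eps \<otimes> eps = \<one>"
    and eps_central: "g \<in> carrier G \<Longrightarrow> eps \<otimes> g = g \<otimes> eps"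
    and dich: "a \<in> carrier G \<Longrightarrow> b \<in> carrier G \<Longrightarrow> a \<otimes> b = b \<otimes> a \<or> a \<otimes> b = eps \<otimes> (b \<otimes> a)"
    and fin: "finite (carrier G)"
begin

lemma prodl_Nil[simp]: "prodl G [] = \<one>" by (simp add: prodl_def)
lemma prodl_Cons[simp]: "prodl G (x # xs) = x \<otimes> prodl G xs" by (simp add: prodl_def)

lemma prodl_closed[simp]: "set xs \<subseteq> carrier G \<Longrightarrow> prodl G xs \<in> carrier G"
  by (induction xs) auto

lemma prodl_append: "set xs \<subseteq> carrier G \<Longrightarrow> set ys \<subseteq> carrier G \<Longrightarrow>
   prodl G (xs @ ys) = prodl G xs \<otimes> prodl G ys"
  by (induction xs) (auto simp: m_assoc)

lemma comm_prodl:
  assumes "a \<in> carrier G" "set xs \<subseteq> carrier G" "\<forall>x\<in>set xs. a \<otimes> x = x \<otimes> a"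
  shows "a \<otimes> prodl G xs = prodl G xs \<otimes> a"
  using assms
proof (induction xs)
  case Nil then show ?case by simp
next
  case (Cons y ys)
  have y: "y \<in> carrier G" and ys: "set ys \<subseteq> carrier G" using Cons by auto
  have IH: "a \<otimes> prodl G ys = prodl G ys \<otimes> a" using Cons by auto
  have ay: "a \<otimes> y = y \<otimes> a" using Cons by auto
  have "a \<otimes> prodl G (y # ys) = (a \<otimes> y) \<otimes> prodl G ys" using y ys Cons(2) by (simp add: m_assoc)
  also have "\<dots> = y \<otimes> (a \<otimes> prodl G ys)" using y ys Cons(2) ay by (simp add: m_assoc)
  also have "\<dots> = prodl G (y # ys) \<otimes> a" using y ys Cons(2) IH by (simp add: m_assoc)
  finally show ?case .
qed

lemma eps_eps_mult: "x \<in> carrier G \<Longrightarrow> eps \<otimes> (eps \<otimes> x) = x"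
  using eps_carr eps_sq by (simp flip: m_assoc)

lemma P1:
  assumes "set xs \<subseteq> carrier G" "mset xs = mset ys"
  shows "prodl G xs = prodl G ys \<or> prodl G xs = eps \<otimes> prodl G ys"
  using assms
proof (induction xs arbitrary: ys)
  case Nil then show ?case by simp
next
  case (Cons a xs)
  have "a \<in> set ys" using Cons(3) by (metis list.set_intros(1) set_mset_mset)
  then obtain ys1 ys2 where ys: "ys = ys1 @ a # ys2" by (meson split_list)
  have a: "a \<in> carrier G" and xs: "set xs \<subseteq> carrier G" using Cons(2) by auto
  have sy: "set ys \<subseteq> carrier G" using Cons(2) Cons(3) by (metis set_mset_mset)
  hence y1: "set ys1 \<subseteq> carrier G" and y2: "set ys2 \<subseteq> carrier G" using ys by auto
  have "mset xs = mset (ys1 @ ys2)" using Cons(3) ys by simp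
  then have IH: "prodl G xs = prodl G ys1 \<otimes> prodl G ys2 \<or> prodl G xs = eps \<otimes> (prodl G ys1 \<otimes> prodl G ys2)"
    using Cons(1)[OF xs, of "ys1 @ ys2"] y1 y2 by (simp add: prodl_append)
  define P1 where "P1 = prodl G ys1"
  define P2 where "P2 = prodl G ys2"
  have p1: "P1 \<in> carrier G" and p2: "P2 \<in> carrier G" using y1 y2 by (auto simp: P1_def P2_def)
  have py: "prodl G ys = P1 \<otimes> (a \<otimes> P2)" unfolding ys P1_def P2_def using y1 y2 a
    by (simp add: prodl_append)
  have key: "a \<otimes> (P1 \<otimes> P2) = prodl G ys \<or> a \<otimes> (P1 \<otimes> P2) = eps \<otimes> prodl G ys"
  proof -
    have "a \<otimes> P1 = P1 \<otimes> a \<or> a \<otimes> P1 = eps \<otimes> (P1 \<otimes> a)" using dich a p1 by blast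
    then show ?thesis
    proof
      assume h: "a \<otimes> P1 = P1 \<otimes> a"
      have "a \<otimes> (P1 \<otimes> P2) = (a \<otimes> P1) \<otimes> P2" using a p1 p2 by (simp add: m_assoc)
      also have "\<dots> = prodl G ys" using h py a p1 p2 by (simp add: m_assoc)
      finally show ?thesis by simp
    next
      assume h: "a \<otimes> P1 = eps \<otimes> (P1 \<otimes> a)"
      have "a \<otimes> (P1 \<otimes> P2) = (a \<otimes> P1) \<otimes> P2" using a p1 p2 by (simp add: m_assoc)
      also have "\<dots> = eps \<otimes> prodl G ys" using h py a p1 p2 eps_carr by (simp add: m_assoc)
      finally show ?thesis by simp
    qed
  qed
  have pyc: "prodl G ys \<in> carrier G" using sy by simp
  from IH show ?case
  proof
    assume "prodl G xs = prodl G ys1 \<otimes> prodl G ys2"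
    then show ?case using key by (simp add: P1_def P2_def)
  next
    assume h0: "prodl G xs = eps \<otimes> (prodl G ys1 \<otimes> prodl G ys2)"
    have h: "prodl G xs = eps \<otimes> (P1 \<otimes> P2)" using h0 by (simp add: P1_def P2_def)
    have "prodl G (a # xs) = eps \<otimes> (a \<otimes> (P1 \<otimes> P2))"
      using h a p1 p2 eps_carr eps_central[OF a] by (simp flip: m_assoc)
    then show ?case using key eps_eps_mult[OF pyc] by auto
  qed
qed

lemma P2:
  assumes "set xs \<subseteq> carrier G" "commset G (set xs)" "mset xs = mset ys"
  shows "prodl G xs = prodl G ys"
  using assms
proof (induction xs arbitrary: ys)
  case Nil then show ?case by simp
next
  case (Cons a xs)
  have "a \<in> set ys" using Cons(4) by (metis list.set_intros(1) set_mset_mset)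
  then obtain ys1 ys2 where ys: "ys = ys1 @ a # ys2" by (meson split_list)
  have a: "a \<in> carrier G" and xs: "set xs \<subseteq> carrier G" using Cons(2) by auto
  have sy: "set ys = set (a # xs)" using Cons(4) by (metis set_mset_mset)
  hence y1: "set ys1 \<subseteq> carrier G" and y2: "set ys2 \<subseteq> carrier G" using ys Cons(2) by auto
  have cx: "commset G (set xs)" using Cons(3) by (auto simp: commset_def)
  have "mset xs = mset (ys1 @ ys2)" using Cons(4) ys by simp
  then have IH: "prodl G xs = prodl G ys1 \<otimes> prodl G ys2"
    using Cons(1)[OF xs cx, of "ys1 @ ys2"] y1 y2 by (simp add: prodl_append)
  have "\<forall>x\<in>set ys1. a \<otimes> x = x \<otimes> a" using Cons(3) sy ys unfolding commset_def
    by (metis Un_iff list.set_intros(1) set_append)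
  then have c: "a \<otimes> prodl G ys1 = prodl G ys1 \<otimes> a" using comm_prodl a y1 by blast
  have "prodl G (a # xs) = (a \<otimes> prodl G ys1) \<otimes> prodl G ys2" using IH a y1 y2 by (simp add: m_assoc)
  also have "\<dots> = prodl G ys" using c ys a y1 y2 by (simp add: prodl_append m_assoc)
  finally show ?case .
qed

lemma P3:
  assumes "set_mset S \<subseteq> carrier G" "\<not> commset G (set_mset S)"
  shows "\<exists>l1 l2. mset l1 = S \<and> mset l2 = S \<and> prodl G l2 = eps \<otimes> prodl G l1"
proof -
  obtain a b where ab: "a \<in># S" "b \<in># S" "a \<otimes> b \<noteq> b \<otimes> a"
    using assms(2) unfolding commset_def by blast
  have "a \<noteq> b" using ab by auto
  then have b: "b \<in># S - {#a#}" using ab by (simp add: in_diff_count)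
  obtain r where r: "mset r = S - {#a#} - {#b#}" using ex_mset by blast
  have S: "add_mset a (add_mset b (S - {#a#} - {#b#})) = S"
    using ab(1) b by (metis insert_DiffM)
  have S2: "add_mset b (add_mset a (S - {#a#} - {#b#})) = S"
    using S by (simp add: add_mset_commute)
  have ac: "a \<in> carrier G" "b \<in> carrier G" using ab assms(1) by auto
  have rc: "set r \<subseteq> carrier G" using r assms(1)
    by (metis (no_types, lifting) in_diffD set_mset_mset subset_iff)
  define p where "p = prodl G r"
  have pc: "p \<in> carrier G" using rc p_def by simp
  have d: "a \<otimes> b = eps \<otimes> (b \<otimes> a)" using dich[OF ac] ab(3) by blast
  have "prodl G (a # b # r) = (a \<otimes> b) \<otimes> p" using ac pc by (simp add: p_def m_assoc)
  also have "\<dots> = eps \<otimes> prodl G (b # a # r)" using d ac pc eps_carr by (simp add: p_def m_assoc)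
  finally have e: "prodl G (a # b # r) = eps \<otimes> prodl G (b # a # r)" .
  have "prodl G (b # a # r) = eps \<otimes> prodl G (a # b # r)"
    using e eps_eps_mult[of "prodl G (b # a # r)"] ac rc by simp
  moreover have "mset (a # b # r) = S" "mset (b # a # r) = S" using S S2 r by auto
  ultimately show ?thesis by blast
qed

lemma prods_sub: "set_mset S \<subseteq> carrier G \<Longrightarrow> seq_prods G S \<subseteq> carrier G"
  unfolding seq_prods_def prodl_def[symmetric] by auto

lemma prods_ne: "\<exists>x. x \<in> seq_prods G S"
  unfolding seq_prods_def using ex_mset by blast

lemma prods_add:
  assumes "set_mset S \<subseteq> carrier G" "set_mset T \<subseteq> carrier G"
    "x \<in> seq_prods G S" "y \<in> seq_prods G T"
  shows "x \<otimes> y \<in> seq_prods G (S + T)"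
proof -
  obtain xs ys where "mset xs = S" "mset ys = T" "x = prodl G xs" "y = prodl G ys"
    using assms(3,4) unfolding seq_prods_def prodl_def[symmetric] by auto
  moreover have "set xs \<subseteq> carrier G" "set ys \<subseteq> carrier G" using assms(1,2) calculation by auto
  ultimately show ?thesis unfolding seq_prods_def prodl_def[symmetric]
    by (auto intro!: exI[of _ "xs @ ys"] simp: prodl_append)
qed

end

context G2 begin
lemma KEY_comm:
  assumes "set_mset S \<subseteq> carrier G" "commset G (set_mset S)" "x \<in> seq_prods G S"
  shows "seq_prods G S = {x}"
proof -
  obtain xs where xs: "mset xs = S" "x = prodl G xs"
    using assms(3) unfolding seq_prods_def prodl_def[symmetric] by auto
  have yx: "y = x" if yy: "y \<in> seq_prods G S" for y
  proof -
    obtain ys where ys: "mset ys = S" "y = prodl G ys"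
      using yy unfolding seq_prods_def prodl_def[symmetric] by auto
    have "set xs = set_mset S" using xs(1) by auto
    then have "prodl G xs = prodl G ys" using P2[of xs ys] xs(1) ys(1) assms(1,2) by simp
    then show ?thesis using xs(2) ys(2) by simp
  qed
  show ?thesis using yx assms(3) by blast
qed

lemma KEY_nc:
  assumes "set_mset S \<subseteq> carrier G" "\<not> commset G (set_mset S)" "x \<in> seq_prods G S"
  shows "seq_prods G S = {x, eps \<otimes> x}"
proof -
  have xc: "x \<in> carrier G" using assms(1,3) prods_sub by auto
  have rel: "y = z \<or> y = eps \<otimes> z" if yz: "y \<in> seq_prods G S" "z \<in> seq_prods G S" for y z
  proof -
    obtain ys where ys: "mset ys = S" "y = prodl G ys"
      using yz unfolding seq_prods_def prodl_def[symmetric] by auto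
    obtain zs where zs: "mset zs = S" "z = prodl G zs"
      using yz unfolding seq_prods_def prodl_def[symmetric] by auto
    have "set ys = set_mset S" using ys(1) by auto
    then show ?thesis using P1[of ys zs] ys zs assms(1) by simp
  qed
  obtain l1 l2 where l: "mset l1 = S" "mset l2 = S" "prodl G l2 = eps \<otimes> prodl G l1"
    using P3 assms by blast
  have in1: "prodl G l1 \<in> seq_prods G S" "prodl G l2 \<in> seq_prods G S"
    unfolding seq_prods_def prodl_def[symmetric] using l(1,2) by blast+
  have "set l1 = set_mset S" using l(1) by auto
  then have l1c: "prodl G l1 \<in> carrier G" using assms(1) by simp
  have "x = prodl G l1 \<or> x = eps \<otimes> prodl G l1" using rel[OF assms(3) in1(1)] .
  then have ex: "eps \<otimes> x \<in> seq_prods G S"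
    using in1 l(3) eps_eps_mult[OF l1c] by auto
  have yx: "y = x \<or> y = eps \<otimes> x" if yy: "y \<in> seq_prods G S" for y
  proof -
    have "y = x \<or> y = eps \<otimes> x" using rel yy assms(3) by blast
    then show ?thesis by blast
  qed
  show ?thesis using yx ex assms(3) by blast
qed

lemma one_in_iff:
  assumes "set_mset S \<subseteq> carrier G" "x \<in> seq_prods G S"
  shows "\<one> \<in> seq_prods G S \<longleftrightarrow> (if commset G (set_mset S) then x = \<one> else (x = \<one> \<or> x = eps))"
proof (cases "commset G (set_mset S)")
  case True then show ?thesis using KEY_comm[OF assms(1) True assms(2)] by auto
next
  case False
  have xc: "x \<in> carrier G" using assms prods_sub by auto
  have "\<one> = eps \<otimes> x \<longleftrightarrow> x = eps"
    using eps_eps_mult[OF xc] eps_sq eps_carr by (metis r_one)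
  then show ?thesis using KEY_nc[OF assms(1) False assms(2)] False by auto
qed

lemma seqs_add: "S \<in> seqs G \<Longrightarrow> T \<in> seqs G \<Longrightarrow> S + T \<in> seqs G"
  by (auto simp: seqs_def)

lemma EQV:
  assumes S: "S \<in> seqs G" and S': "S' \<in> seqs G" and x: "x \<in> seq_prods G S" "x \<in> seq_prods G S'"
    and c: "\<And>A. A \<subseteq> carrier G \<Longrightarrow> commset G (set_mset S \<union> A) \<longleftrightarrow> commset G (set_mset S' \<union> A)"
  shows "seq_class G S = seq_class G S'"
proof -
  have *: "S + T \<in> prod_one_seqs G \<longleftrightarrow> S' + T \<in> prod_one_seqs G" if T: "T \<in> seqs G" for T
  proof -
    obtain y where y: "y \<in> seq_prods G T" using prods_ne by blast
    have sc: "set_mset S \<subseteq> carrier G" "set_mset S' \<subseteq> carrier G" "set_mset T \<subseteq> carrier G"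
      using S S' T by (auto simp: seqs_def)
    have xy: "x \<otimes> y \<in> seq_prods G (S + T)" "x \<otimes> y \<in> seq_prods G (S' + T)"
      using prods_add sc x y by auto
    have cc: "commset G (set_mset (S + T)) \<longleftrightarrow> commset G (set_mset (S' + T))"
      using c[OF sc(3)] by simp
    show ?thesis
      unfolding prod_one_seqs_def
      using one_in_iff[of "S + T", OF _ xy(1)] one_in_iff[of "S' + T", OF _ xy(2)] sc cc
        seqs_add[OF S T] seqs_add[OF S' T] by auto
  qed
  show ?thesis unfolding seq_class_def seq_equiv_def using * by auto
qed

end

context G2 begin

lemma class_eqI:
  assumes "S \<in> seqs G" "S' \<in> seqs G"
    "\<And>T. T \<in> seqs G \<Longrightarrow> S + T \<in> prod_one_seqs G \<longleftrightarrow> S' + T \<in> prod_one_seqs G"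
  shows "seq_class G S = seq_class G S'"
  using assms unfolding seq_class_def seq_equiv_def by blast

lemma in_own_class: "S \<in> seqs G \<Longrightarrow> S \<in> seq_class G S"
  unfolding seq_class_def seq_equiv_def by blast

lemma class_add_eq:
  assumes A: "A \<in> seqs G" and B: "B \<in> seqs G"
  shows "class_add G (seq_class G A) (seq_class G B) = seq_class G (A + B)"
proof -
  define A' where "A' = (SOME U. U \<in> seq_class G A)"
  define B' where "B' = (SOME U. U \<in> seq_class G B)"
  have a': "A' \<in> seq_class G A" unfolding A'_def using in_own_class[OF A] by (rule someI)
  have b': "B' \<in> seq_class G B" unfolding B'_def using in_own_class[OF B] by (rule someI)
  have A'': "A' \<in> seqs G" "\<And>T. T \<in> seqs G \<Longrightarrow> A + T \<in> prod_one_seqs G \<longleftrightarrow> A' + T \<in> prod_one_seqs G"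
    using a' unfolding seq_class_def seq_equiv_def by blast+
  have B'': "B' \<in> seqs G" "\<And>T. T \<in> seqs G \<Longrightarrow> B + T \<in> prod_one_seqs G \<longleftrightarrow> B' + T \<in> prod_one_seqs G"
    using b' unfolding seq_class_def seq_equiv_def by blast+
  have "seq_class G (A' + B') = seq_class G (A + B)"
  proof (rule class_eqI)
    show "A' + B' \<in> seqs G" using A'' B'' seqs_add by blast
    show "A + B \<in> seqs G" using A B seqs_add by blast
    fix T assume T: "T \<in> seqs G"
    have "A + B + T \<in> prod_one_seqs G \<longleftrightarrow> A + (B + T) \<in> prod_one_seqs G" by (simp add: add.assoc)
    also have "\<dots> \<longleftrightarrow> A' + (B + T) \<in> prod_one_seqs G" using A''(2) seqs_add[OF B T] by blast
    also have "\<dots> \<longleftrightarrow> B + (A' + T) \<in> prod_one_seqs G" by (simp add: add_ac)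
    also have "\<dots> \<longleftrightarrow> B' + (A' + T) \<in> prod_one_seqs G" using B''(2) seqs_add[OF A''(1) T] by blast
    also have "\<dots> \<longleftrightarrow> A' + B' + T \<in> prod_one_seqs G" by (simp add: add_ac)
    finally show "A' + B' + T \<in> prod_one_seqs G \<longleftrightarrow> A + B + T \<in> prod_one_seqs G" by blast
  qed
  then show ?thesis unfolding class_add_def A'_def B'_def by simp
qed

lemma mem_repeat: "x \<in># repeat_mset k S \<longleftrightarrow> k \<ge> 1 \<and> x \<in># S"
proof -
  have "x \<in># repeat_mset k S \<longleftrightarrow> 0 < k * count S x" by (metis count_greater_zero_iff count_repeat_mset)
  also have "\<dots> \<longleftrightarrow> k \<ge> 1 \<and> 0 < count S x" by (simp add: nat_0_less_mult_iff Suc_le_eq)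
  finally show ?thesis by simp
qed

lemma set_repeat_sub: "set_mset (repeat_mset k S) \<subseteq> set_mset S"
proof
  fix x assume "x \<in># repeat_mset k S" then show "x \<in># S" using mem_repeat[of x k S] by blast
qed

lemma repeat_seqs: "S \<in> seqs G \<Longrightarrow> repeat_mset k S \<in> seqs G"
  unfolding seqs_def using set_repeat_sub[of k S] by blast

lemma set_repeat: "k \<ge> 1 \<Longrightarrow> set_mset (repeat_mset k S) = set_mset S"
proof
  assume k: "k \<ge> 1"
  show "set_mset S \<subseteq> set_mset (repeat_mset k S)"
  proof
    fix x assume "x \<in># S" then show "x \<in># repeat_mset k S" using mem_repeat[of x k S] k by blast
  qed
qed (rule set_repeat_sub)

lemma pow_in_prods:
  assumes "S \<in> seqs G" "g \<in> seq_prods G S"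
  shows "g [^] k \<in> seq_prods G (repeat_mset k S)"
proof (induction k)
  case 0
  have "prodl G [] \<in> seq_prods G {#}" unfolding seq_prods_def prodl_def[symmetric] by auto
  then show ?case by simp
next
  case (Suc k)
  have gc: "g \<in> carrier G" using assms prods_sub unfolding seqs_def by blast
  have "g \<otimes> g [^] k \<in> seq_prods G (S + repeat_mset k S)"
    using prods_add[OF _ _ assms(2) Suc] assms(1) repeat_seqs[OF assms(1)] unfolding seqs_def by blast
  moreover have "repeat_mset (Suc k) S = S + repeat_mset k S" by simp
  ultimately show ?case unfolding nat_pow_Suc2[OF gc] by metis
qed

end

context G2 begin

lemma seqs_carr: "S \<in> seqs G \<Longrightarrow> set_mset S \<subseteq> carrier G" by (simp add: seqs_def)

lemma prods_carr: "S \<in> seqs G \<Longrightarrow> g \<in> seq_prods G S \<Longrightarrow> g \<in> carrier G"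
  using prods_sub seqs_carr by blast

lemma Rshift:
  assumes S: "S \<in> seqs G" and g: "g \<in> seq_prods G S" and k: "k \<ge> 1"
  shows "seq_class G (repeat_mset (k + ord g) S) = seq_class G (repeat_mset k S)"
proof (rule EQV)
  have gc: "g \<in> carrier G" using prods_carr S g by blast
  show "repeat_mset (k + ord g) S \<in> seqs G" "repeat_mset k S \<in> seqs G" using repeat_seqs S by blast+
  show "g [^] k \<in> seq_prods G (repeat_mset k S)" using pow_in_prods S g by blast
  have "g [^] (k + ord g) = g [^] k \<otimes> g [^] ord g" by (rule nat_pow_mult[OF gc, symmetric])
  also have "\<dots> = g [^] k" using gc by simp
  finally show "g [^] k \<in> seq_prods G (repeat_mset (k + ord g) S)"
    using pow_in_prods[OF S g, of "k + ord g"] by simp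
  fix A
  have "set_mset (repeat_mset (k + ord g) S) = set_mset (repeat_mset k S)"
    using set_repeat[of k S] set_repeat[of "k + ord g" S] k by simp
  then show "commset G (set_mset (repeat_mset (k + ord g) S) \<union> A) = commset G (set_mset (repeat_mset k S) \<union> A)"
    by simp
qed

lemma Rmod:
  assumes S: "S \<in> seqs G" and g: "g \<in> seq_prods G S" and r: "r \<ge> 1"
  shows "seq_class G (repeat_mset (r + q * ord g) S) = seq_class G (repeat_mset r S)"
proof (induction q)
  case 0 then show ?case by simp
next
  case (Suc q)
  have e: "r + Suc q * ord g = (r + q * ord g) + ord g" by simp
  have "seq_class G (repeat_mset ((r + q * ord g) + ord g) S) = seq_class G (repeat_mset (r + q * ord g) S)"
    using Rshift[OF S g, of "r + q * ord g"] r by simp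
  then show ?case using Suc e by metis
qed

lemma GRP:
  assumes S: "S \<in> seqs G" and g: "g \<in> seq_prods G S"
  defines "n \<equiv> ord g"
  defines "K \<equiv> (\<lambda>k. seq_class G (repeat_mset k S)) ` {1..n}"
  defines "KG \<equiv> \<lparr>carrier = K, monoid.mult = class_add G, one = seq_class G (repeat_mset n S)\<rparr>"
  shows "K \<subseteq> class_semigroup G" "group KG" "\<forall>x\<in>K. \<exists>k::nat. x = seq_class G S [^]\<^bsub>KG\<^esub> k"
proof -
  define R where "R k = seq_class G (repeat_mset k S)" for k
  have gc: "g \<in> carrier G" using prods_carr S g by blast
  have n1: "n \<ge> 1" unfolding n_def using ord_ge_1[OF fin gc] .
  have KR: "K = R ` {1..n}" unfolding K_def R_def by simp
  have Radd: "class_add G (R i) (R j) = R (i + j)" for i j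
    unfolding R_def using class_add_eq[OF repeat_seqs[OF S] repeat_seqs[OF S]]
    by (simp add: repeat_mset_distrib)
  have RinK: "R k \<in> K" if "k \<ge> 1" for k
  proof -
    define r where "r = (k - 1) mod n + 1"
    define q where "q = (k - 1) div n"
    have "k = r + q * n" unfolding r_def q_def using that by simp
    then have "R k = R r" unfolding R_def n_def using Rmod[OF S g, of r q] r_def by simp
    moreover have "r \<in> {1..n}" unfolding r_def using n1 by (simp add: Suc_le_eq)
    ultimately show ?thesis unfolding KR by blast
  qed
  have Rsh: "R (k + n) = R k" if "k \<ge> 1" for k
    unfolding R_def n_def using Rshift[OF S g that] .
  have Kel: "\<exists>k\<ge>1. x = R k" if "x \<in> K" for x using that unfolding KR by auto
  have cKG: "carrier KG = K" and mKG: "\<And>x y. x \<otimes>\<^bsub>KG\<^esub> y = class_add G x y" and oKG: "\<one>\<^bsub>KG\<^esub> = R n"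
    unfolding KG_def R_def by simp_all
  show "K \<subseteq> class_semigroup G"
    unfolding K_def class_semigroup_def using repeat_seqs[OF S] by blast
  show grp: "group KG"
  proof (rule groupI)
    fix x y assume "x \<in> carrier KG" "y \<in> carrier KG"
    then have "x \<in> K" "y \<in> K" using cKG by simp_all
    then obtain i j where "i \<ge> 1" "j \<ge> 1" "x = R i" "y = R j" using Kel by meson
    then show "x \<otimes>\<^bsub>KG\<^esub> y \<in> carrier KG" using mKG Radd RinK cKG by simp
  next
    show "\<one>\<^bsub>KG\<^esub> \<in> carrier KG" using oKG cKG RinK n1 by simp
  next
    fix x y z assume "x \<in> carrier KG" "y \<in> carrier KG" "z \<in> carrier KG"
    then have "x \<in> K" "y \<in> K" "z \<in> K" using cKG by simp_all
    then obtain i j l where "x = R i" "y = R j" "z = R l" using Kel by meson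
    then show "x \<otimes>\<^bsub>KG\<^esub> y \<otimes>\<^bsub>KG\<^esub> z = x \<otimes>\<^bsub>KG\<^esub> (y \<otimes>\<^bsub>KG\<^esub> z)"
      using mKG Radd by (simp add: add.assoc)
  next
    fix x assume "x \<in> carrier KG"
    then have "x \<in> K" using cKG by simp
    then obtain i where i: "i \<ge> 1" "x = R i" using Kel by meson
    have "\<one>\<^bsub>KG\<^esub> \<otimes>\<^bsub>KG\<^esub> x = R (n + i)" using oKG mKG Radd i(2) by simp
    also have "\<dots> = R i" using Rsh[OF i(1)] by (metis add.commute)
    finally show "\<one>\<^bsub>KG\<^esub> \<otimes>\<^bsub>KG\<^esub> x = x" using i(2) by simp
  next
    fix x assume "x \<in> carrier KG"
    then have "x \<in> R ` {1..n}" using cKG KR by simp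
    then obtain i where i: "i \<ge> 1" "i \<le> n" "x = R i" by auto
    have "R (n + n - i) \<in> carrier KG" using RinK cKG i n1 by simp
    moreover have "R (n + n - i) \<otimes>\<^bsub>KG\<^esub> x = \<one>\<^bsub>KG\<^esub>"
    proof -
      have "R (n + n - i) \<otimes>\<^bsub>KG\<^esub> x = R (n + n)" using mKG Radd i by simp
      also have "\<dots> = R n" using Rsh n1 by simp
      finally show ?thesis using oKG by simp
    qed
    ultimately show "\<exists>y\<in>carrier KG. y \<otimes>\<^bsub>KG\<^esub> x = \<one>\<^bsub>KG\<^esub>" by blast
  qed
  have pw: "R 1 [^]\<^bsub>KG\<^esub> k = R (k + n)" for k :: nat
  proof (induction k)
    case 0 then show ?case using oKG by simp
  next
    case (Suc k) then show ?case using mKG Radd by simp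
  qed
  have S1: "seq_class G S = R 1" unfolding R_def by simp
  show "\<forall>x\<in>K. \<exists>k::nat. x = seq_class G S [^]\<^bsub>KG\<^esub> k"
  proof
    fix x assume "x \<in> K"
    then obtain i where i: "i \<ge> 1" "x = R i" using Kel by blast
    have "x = seq_class G S [^]\<^bsub>KG\<^esub> i" using S1 pw Rsh[OF i(1)] i(2) by simp
    then show "\<exists>k::nat. x = seq_class G S [^]\<^bsub>KG\<^esub> k" by blast
  qed
qed

end

context G2 begin

lemma single_comm:
  assumes S: "S \<in> seqs G" and sp: "seq_prods G S = {g}"
  shows "commset G (set_mset S)"
proof (rule ccontr)
  assume nc: "\<not> commset G (set_mset S)"
  have g: "g \<in> seq_prods G S" using sp by simp
  have gc: "g \<in> carrier G" using prods_carr S g by blast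
  have "seq_prods G S = {g, eps \<otimes> g}" using KEY_nc[OF seqs_carr[OF S] nc g] .
  then have "eps \<otimes> g = g" using sp by (metis insertCI singletonD)
  then show False using eps_ne eps_carr gc by simp
qed

lemma CARD:
  assumes S: "S \<in> seqs G" and sp: "seq_prods G S = {g}"
  shows "card ((\<lambda>k. seq_class G (repeat_mset k S)) ` {1..ord g}) = ord g"
proof -
  define n where "n = ord g"
  define R where "R k = seq_class G (repeat_mset k S)" for k
  have g: "g \<in> seq_prods G S" using sp by simp
  have gc: "g \<in> carrier G" using prods_carr S g by blast
  have cS: "commset G (set_mset S)" using single_comm[OF S sp] .
  have pr: "seq_prods G (repeat_mset k S) = {g [^] k}" if "k \<ge> 1" for k
    using KEY_comm[OF seqs_carr[OF repeat_seqs[OF S]] _ pow_in_prods[OF S g]] cS set_repeat[OF that, of S]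
    by simp
  have neq: "R i \<noteq> R j" if ij: "1 \<le> i" "i < j" "j \<le> n" for i j
  proof
    assume eq: "R i = R j"
    have "repeat_mset j S \<in> R j" unfolding R_def by (rule in_own_class[OF repeat_seqs[OF S]])
    then have "repeat_mset j S \<in> R i" using eq by simp
    then have equiv: "\<And>T. T \<in> seqs G \<Longrightarrow> (repeat_mset i S + T \<in> prod_one_seqs G \<longleftrightarrow> repeat_mset j S + T \<in> prod_one_seqs G)"
      unfolding R_def seq_class_def seq_equiv_def by blast
    have e1: "repeat_mset i S + repeat_mset (n - i) S = repeat_mset n S"
      using ij by (simp add: repeat_mset_distrib[symmetric])
    have e2: "repeat_mset j S + repeat_mset (n - i) S = repeat_mset (j + (n - i)) S"
      by (simp add: repeat_mset_distrib[symmetric])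
    have n1: "n \<ge> 1" using ij by simp
    have "seq_prods G (repeat_mset n S) = {\<one>}" using pr[OF n1] gc by (simp add: n_def)
    then have "repeat_mset n S \<in> prod_one_seqs G" unfolding prod_one_seqs_def using repeat_seqs[OF S] by simp
    then have "repeat_mset (j + (n - i)) S \<in> prod_one_seqs G"
      using equiv[OF repeat_seqs[OF S, of "n - i"]] e1 e2 by simp
    then have "\<one> \<in> {g [^] (j + (n - i))}" unfolding prod_one_seqs_def using pr[of "j + (n - i)"] ij by simp
    then have "g [^] (j + (n - i)) = \<one>" by simp
    then have "n dvd (j + (n - i))" using pow_eq_id[OF gc] n_def by simp
    moreover have "j + (n - i) = n + (j - i)" using ij by simp
    ultimately have "n dvd (j - i)" by (simp add: dvd_add_right_iff)
    moreover have "0 < j - i" "j - i < n" using ij by auto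
    ultimately show False using nat_dvd_not_less by blast
  qed
  have "inj_on R {1..n}"
  proof (rule inj_onI)
    fix i j assume "i \<in> {1..n}" "j \<in> {1..n}" "R i = R j"
    then show "i = j" using neq[of i j] neq[of j i] by (cases "i < j"; cases "j < i") auto
  qed
  then have "card (R ` {1..n}) = n" by (simp add: card_image)
  then show ?thesis unfolding R_def n_def .
qed

lemma CLIFF: "clifford_semigroup (class_semigroup G) (class_add G)"
  unfolding clifford_semigroup_def
proof
  fix x assume "x \<in> class_semigroup G"
  then obtain S where S: "S \<in> seqs G" and x: "x = seq_class G S" unfolding class_semigroup_def by blast
  obtain g where g: "g \<in> seq_prods G S" using prods_ne by blast
  have gc: "g \<in> carrier G" using prods_carr S g by blast
  define K where "K = (\<lambda>k. seq_class G (repeat_mset k S)) ` {1..ord g}"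
  have "ord g \<ge> 1" using ord_ge_1[OF fin gc] .
  then have "x \<in> K" unfolding K_def x by (intro image_eqI[of _ _ 1]) auto
  moreover have "semigroup_subgroup (class_semigroup G) (class_add G) K"
    unfolding semigroup_subgroup_def K_def using GRP[OF S g] by blast
  ultimately show "\<exists>K. semigroup_subgroup (class_semigroup G) (class_add G) K \<and> x \<in> K" by blast
qed

end

context G2 begin

lemma SEMI: "seminormal (prod_one_seqs G)"
  unfolding seminormal_def
proof (intro ballI impI)
  fix x assume "(\<exists>S\<in>prod_one_seqs G. zvec S = (\<lambda>g. 2 * x g)) \<and> (\<exists>S\<in>prod_one_seqs G. zvec S = (\<lambda>g. 3 * x g))"
  then obtain S2 S3 where S2: "S2 \<in> prod_one_seqs G" "zvec S2 = (\<lambda>g. 2 * x g)"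
    and S3: "S3 \<in> prod_one_seqs G" "zvec S3 = (\<lambda>g. 3 * x g)" by blast
  have c2: "int (count S2 g) = 2 * x g" for g using fun_cong[OF S2(2), of g] by (simp add: zvec_def)
  have c3: "int (count S3 g) = 3 * x g" for g using fun_cong[OF S3(2), of g] by (simp add: zvec_def)
  have xpos: "x g \<ge> 0" for g using c2[of g] by linarith
  have fin2: "finite {g. nat (x g) > 0}"
  proof (rule finite_subset)
    show "{g. nat (x g) > 0} \<subseteq> set_mset S2"
    proof
      fix g assume "g \<in> {g. nat (x g) > 0}"
      then have "x g > 0" by simp
      then have "count S2 g > 0" using c2[of g] by linarith
      then show "g \<in> set_mset S2" by (simp only: count_greater_zero_iff)
    qed
  qed simp
  define Xm where "Xm = Abs_multiset (\<lambda>g. nat (x g))"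
  have cX: "count Xm g = nat (x g)" for g unfolding Xm_def using count_Abs_multiset[OF fin2] by simp
  have eX2: "S2 = Xm + Xm"
  proof (rule multiset_eqI)
    fix g show "count S2 g = count (Xm + Xm) g" using c2[of g] xpos[of g] cX[of g] by simp
  qed
  have eX3: "S3 = Xm + Xm + Xm"
  proof (rule multiset_eqI)
    fix g show "count S3 g = count (Xm + Xm + Xm) g" using c3[of g] xpos[of g] cX[of g] by simp
  qed
  have zX: "zvec Xm = x" unfolding zvec_def using cX xpos by (simp add: fun_eq_iff)
  have S2s: "S2 \<in> seqs G" and S3s: "S3 \<in> seqs G" and o2: "\<one> \<in> seq_prods G S2" and o3: "\<one> \<in> seq_prods G S3"
    using S2(1) S3(1) unfolding prod_one_seqs_def by blast+
  have setX: "set_mset S2 = set_mset Xm" "set_mset S3 = set_mset Xm" unfolding eX2 eX3 by simp_all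
  have Xs: "Xm \<in> seqs G" using S2s setX(1) unfolding seqs_def by simp
  have Xc: "set_mset Xm \<subseteq> carrier G" using Xs seqs_carr by blast
  obtain y where y: "y \<in> seq_prods G Xm" using prods_ne by blast
  have yc: "y \<in> carrier G" using prods_carr Xs y by blast
  have y2: "y \<otimes> y \<in> seq_prods G S2" unfolding eX2 using prods_add[OF Xc Xc y y] .
  have y3: "y \<otimes> y \<otimes> y \<in> seq_prods G S3" unfolding eX3 using prods_add[OF _ Xc prods_add[OF Xc Xc y y] y] Xc by simp
  have i2: "if commset G (set_mset Xm) then y \<otimes> y = \<one> else (y \<otimes> y = \<one> \<or> y \<otimes> y = eps)"
    using one_in_iff[OF seqs_carr[OF S2s] y2] o2 setX(1) by simp
  have i3: "if commset G (set_mset Xm) then y \<otimes> y \<otimes> y = \<one> else (y \<otimes> y \<otimes> y = \<one> \<or> y \<otimes> y \<otimes> y = eps)"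
    using one_in_iff[OF seqs_carr[OF S3s] y3] o3 setX(2) by simp
  have goal: "if commset G (set_mset Xm) then y = \<one> else (y = \<one> \<or> y = eps)"
  proof (cases "commset G (set_mset Xm)")
    case True
    then have "y \<otimes> y = \<one>" "y \<otimes> y \<otimes> y = \<one>" using i2 i3 by simp_all
    then have "y = \<one>" using yc by simp
    then show ?thesis using True by simp
  next
    case False
    then have h2: "y \<otimes> y = \<one> \<or> y \<otimes> y = eps" and h3: "y \<otimes> y \<otimes> y = \<one> \<or> y \<otimes> y \<otimes> y = eps"
      using i2 i3 by simp_all
    have "y = \<one> \<or> y = eps"
    proof (cases "y \<otimes> y = \<one>")
      case True then show ?thesis using h3 yc by simp
    next
      case F: False
      then have ye: "y \<otimes> y = eps" using h2 by simp
      then have "eps \<otimes> y = \<one> \<or> eps \<otimes> y = eps" using h3 by simp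
      then show ?thesis
      proof
        assume "eps \<otimes> y = \<one>"
        then have "eps \<otimes> (eps \<otimes> y) = eps" using eps_carr by simp
        then show ?thesis using eps_eps_mult[OF yc] by simp
      next
        assume "eps \<otimes> y = eps"
        then show ?thesis using eps_carr yc by simp
      qed
    qed
    then show ?thesis using False by simp
  qed
  have "\<one> \<in> seq_prods G Xm" using one_in_iff[OF Xc y] goal by simp
  then have "Xm \<in> prod_one_seqs G" unfolding prod_one_seqs_def using Xs by simp
  then show "\<exists>S\<in>prod_one_seqs G. zvec S = x" using zX by blast
qed

end


lemma sq_le_pow: "(h::nat) \<ge> 4 \<Longrightarrow> h * h \<le> 2 ^ h"
proof (induction h rule: nat_induct_at_least)
  case base then show ?case by simp
next
  case (Suc h)
  have h4: "4 * h \<le> h * h" using mult_le_mono1[OF Suc(1), of h] by simp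
  have "Suc h * Suc h = h * h + 2 * h + 1" by simp
  also have "\<dots> \<le> h * h + h * h" using h4 Suc(1) by linarith
  also have "\<dots> \<le> 2 ^ Suc h" using Suc(2) by simp
  finally show ?case .
qed

lemma ARITH0:
  fixes e h m :: nat
  assumes e: "e \<ge> 1" and h: "h \<ge> e + 3" and m: "m \<ge> h + e + 1"
  shows "m + h + m * 2 ^ e * h \<le> 2 ^ m"
  using m
proof (induction m rule: nat_induct_at_least)
  case base
  define P :: nat where "P = 2 ^ e"
  define A where "A = h + e + 1"
  have P2: "P \<ge> 2" unfolding P_def using e by (metis one_le_numeral power_increasing power_one_right)
  have h4: "h \<ge> 4" using e h by simp
  have A: "A \<le> 2 * h - 2" unfolding A_def using h by simp
  have "A + h + A * P * h \<le> 3 * h + (2 * h - 2) * P * h"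
    using A h by (intro add_mono mult_le_mono1) auto
  also have "\<dots> \<le> 2 * P * h + (2 * h - 2) * P * h"
  proof -
    have "3 * h \<le> 2 * 2 * h" by simp
    also have "\<dots> \<le> 2 * P * h" using P2 by (intro mult_le_mono1) simp
    finally show ?thesis by simp
  qed
  also have "\<dots> = 2 * P * (h * h)"
  proof -
    have "2 * P * h + (2 * h - 2) * P * h = (2 + (2 * h - 2)) * P * h" by (simp add: algebra_simps)
    also have "2 + (2 * h - 2) = 2 * h" using h4 by simp
    finally show ?thesis by (simp add: algebra_simps)
  qed
  also have "\<dots> \<le> 2 * P * 2 ^ h" using sq_le_pow[OF h4] by simp
  also have "\<dots> = 2 ^ A" unfolding A_def P_def by (simp add: power_add)
  finally show ?case unfolding A_def P_def .
next
  case (Suc m)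
  define P :: nat where "P = 2 ^ e"
  have "2 ^ (h + e + 1) \<le> (2::nat) ^ m" by (rule power_increasing[OF Suc(1)]) simp
  moreover have "(2::nat) ^ (h + e + 1) = 2 ^ (h + 1) * P" unfolding P_def by (simp add: power_add)
  moreover have "h + 1 \<le> (2::nat) ^ (h + 1)" by (rule less_imp_le, rule less_exp)
  ultimately have "(h + 1) * P \<le> 2 ^ m" by (metis mult_le_mono1 order_trans)
  moreover have "(h + 1) * P = P * h + P" by (simp add: algebra_simps)
  moreover have "P \<ge> 1" unfolding P_def by simp
  ultimately have b: "P * h + 1 \<le> 2 ^ m" by linarith
  have "Suc m + h + Suc m * 2 ^ e * h = (m + h + m * 2 ^ e * h) + (P * h + 1)"
    unfolding P_def by (simp add: algebra_simps)
  also have "\<dots> \<le> 2 ^ m + 2 ^ m" using Suc(2) b by simp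
  finally show ?case by simp
qed

lemma ARITH:
  fixes g0 c h :: nat
  assumes "2 \<le> c" "c + 2 \<le> h" "2 * h \<le> g0"
  shows "g0 + (g0 - c) * 2 ^ (h - c - 1) * h \<le> 2 ^ (g0 - c)"
proof -
  have "(g0 - c) + h + (g0 - c) * 2 ^ (h - c - 1) * h \<le> 2 ^ (g0 - c)"
    using assms by (intro ARITH0) auto
  moreover have "g0 \<le> (g0 - c) + h" using assms by simp
  ultimately show ?thesis by simp
qed


context G2 begin

abbreviation "ZZ \<equiv> group_center G"
definition Cn :: "'a \<Rightarrow> 'a set" where "Cn n = {x \<in> carrier G. x \<otimes> n = n \<otimes> x}"

lemma Z_sub: "ZZ \<subseteq> carrier G" unfolding group_center_def by blast

lemma Z_comm: "z \<in> ZZ \<Longrightarrow> g \<in> carrier G \<Longrightarrow> z \<otimes> g = g \<otimes> z" unfolding group_center_def by blast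

lemma one_Z: "\<one> \<in> ZZ" unfolding group_center_def by simp

lemma eps_Z: "eps \<in> ZZ" unfolding group_center_def using eps_carr eps_central by blast

lemma prods_list: "x \<in> seq_prods G S \<Longrightarrow> \<exists>xs. mset xs = S \<and> x = prodl G xs"
  unfolding seq_prods_def prodl_def by blast

lemma prodl_Z: assumes "set xs \<subseteq> ZZ" shows "prodl G xs \<in> ZZ"
proof -
  have xc: "set xs \<subseteq> carrier G" using assms Z_sub by blast
  have "prodl G xs \<otimes> g = g \<otimes> prodl G xs" if g: "g \<in> carrier G" for g
  proof -
    have "\<forall>x\<in>set xs. g \<otimes> x = x \<otimes> g" using assms Z_comm g by (metis subsetD)
    then show ?thesis using comm_prodl[OF g xc] by simp
  qed
  then show ?thesis unfolding group_center_def using xc by simp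
qed

lemma prodl_Cn: assumes "n \<in> carrier G" "set xs \<subseteq> carrier G" "\<forall>x\<in>set xs. x \<otimes> n = n \<otimes> x"
  shows "prodl G xs \<in> Cn n"
proof -
  have "\<forall>x\<in>set xs. n \<otimes> x = x \<otimes> n" using assms(3) by simp
  then have "n \<otimes> prodl G xs = prodl G xs \<otimes> n" using comm_prodl[OF assms(1,2)] by simp
  then show ?thesis unfolding Cn_def using assms by simp
qed

lemma comm_Z:
  assumes "B \<subseteq> carrier G" "A \<subseteq> carrier G"
  shows "commset G (B \<union> A) \<longleftrightarrow> commset G ((B - ZZ) \<union> A)"
proof
  assume "commset G (B \<union> A)" then show "commset G ((B - ZZ) \<union> A)" unfolding commset_def by blast
next
  assume h: "commset G ((B - ZZ) \<union> A)"
  show "commset G (B \<union> A)" unfolding commset_def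
  proof (intro ballI)
    fix a b assume a: "a \<in> B \<union> A" and b: "b \<in> B \<union> A"
    have ac: "a \<in> carrier G" and bc: "b \<in> carrier G" using a b assms by blast+
    show "a \<otimes> b = b \<otimes> a"
    proof (cases "a \<in> ZZ")
      case True then show ?thesis using Z_comm bc by blast
    next
      case aZ: False
      show ?thesis
      proof (cases "b \<in> ZZ")
        case True then show ?thesis using Z_comm ac by metis
      next
        case False
        then have "a \<in> (B - ZZ) \<union> A" "b \<in> (B - ZZ) \<union> A" using a b aZ by blast+
        then show ?thesis using h unfolding commset_def by blast
      qed
    qed
  qed
qed

lemma FAC:
  assumes S: "S \<in> seqs G" and S': "S' \<in> seqs G"
    and c: "(if commset G (set_mset S) then Some (set_mset S - ZZ) else None) =
            (if commset G (set_mset S') then Some (set_mset S' - ZZ) else None)"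
    and p: "seq_prods G S = seq_prods G S'"
  shows "seq_class G S = seq_class G S'"
proof -
  obtain x where x: "x \<in> seq_prods G S" using prods_ne by blast
  have sc: "set_mset S \<subseteq> carrier G" "set_mset S' \<subseteq> carrier G" using S S' seqs_carr by blast+
  show ?thesis
  proof (rule EQV[OF S S' x])
    show "x \<in> seq_prods G S'" using x p by simp
    fix A assume A: "A \<subseteq> carrier G"
    show "commset G (set_mset S \<union> A) \<longleftrightarrow> commset G (set_mset S' \<union> A)"
    proof (cases "commset G (set_mset S)")
      case True
      then have T': "commset G (set_mset S')" and eq: "set_mset S - ZZ = set_mset S' - ZZ"
        using c by (auto split: if_splits)
      show ?thesis using comm_Z[OF sc(1) A] comm_Z[OF sc(2) A] eq by simp
    next
      case False
      then have F': "\<not> commset G (set_mset S')" using c by (auto split: if_splits)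
      have "\<not> commset G (set_mset S \<union> A)" using False unfolding commset_def by blast
      moreover have "\<not> commset G (set_mset S' \<union> A)" using F' unfolding commset_def by blast
      ultimately show ?thesis by simp
    qed
  qed
qed

lemma Cn_sub: "Cn n \<subseteq> carrier G" unfolding Cn_def by blast

lemma comm_mult:
  assumes "a \<in> carrier G" "b \<in> carrier G" "g \<in> carrier G" "a \<otimes> g = g \<otimes> a" "b \<otimes> g = g \<otimes> b"
  shows "(a \<otimes> b) \<otimes> g = g \<otimes> (a \<otimes> b)"
proof -
  have "(a \<otimes> b) \<otimes> g = a \<otimes> (b \<otimes> g)" using assms(1-3) by (simp add: m_assoc)
  also have "\<dots> = a \<otimes> (g \<otimes> b)" using assms by simp
  also have "\<dots> = (a \<otimes> g) \<otimes> b" using assms(1-3) by (simp add: m_assoc)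
  also have "\<dots> = (g \<otimes> a) \<otimes> b" using assms by simp
  also have "\<dots> = g \<otimes> (a \<otimes> b)" using assms(1-3) by (simp add: m_assoc)
  finally show ?thesis .
qed

lemma Cn_mult: assumes "n \<in> carrier G" "x \<in> Cn n" "y \<in> Cn n" shows "x \<otimes> y \<in> Cn n"
proof -
  have "x \<in> carrier G" "y \<in> carrier G" "x \<otimes> n = n \<otimes> x" "y \<otimes> n = n \<otimes> y" using assms unfolding Cn_def by auto
  then show ?thesis unfolding Cn_def using comm_mult assms(1) by simp
qed

lemma Z_mult: assumes "z \<in> ZZ" "w \<in> ZZ" shows "z \<otimes> w \<in> ZZ"
proof -
  have zc: "z \<in> carrier G" "w \<in> carrier G" using assms Z_sub by blast+
  have "(z \<otimes> w) \<otimes> g = g \<otimes> (z \<otimes> w)" if "g \<in> carrier G" for g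
    using comm_mult[OF zc that] Z_comm assms that by simp
  then show ?thesis unfolding group_center_def using zc by simp
qed

lemma Cn_inv: assumes "n \<in> carrier G" "x \<in> Cn n" shows "inv x \<in> Cn n"
proof -
  have xc: "x \<in> carrier G" and e: "x \<otimes> n = n \<otimes> x" using assms unfolding Cn_def by auto
  have "inv x \<otimes> n = inv x \<otimes> n \<otimes> (x \<otimes> inv x)" using xc assms(1) by (simp add: m_assoc)
  also have "\<dots> = inv x \<otimes> (n \<otimes> x) \<otimes> inv x" using xc assms(1) by (simp add: m_assoc)
  also have "\<dots> = inv x \<otimes> (x \<otimes> n) \<otimes> inv x" using e by simp
  also have "\<dots> = n \<otimes> inv x" using xc assms(1) by (simp flip: m_assoc)
  finally show ?thesis unfolding Cn_def using xc by simp
qed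

lemma Cn_half:
  assumes n: "n \<in> carrier G" "n \<notin> ZZ"
  shows "2 * card (Cn n) \<le> card (carrier G)"
proof -
  obtain y where y: "y \<in> carrier G" "n \<otimes> y \<noteq> y \<otimes> n" using n unfolding group_center_def by blast
  have yn: "y \<notin> Cn n" using y unfolding Cn_def by auto
  define f where "f x = y \<otimes> x" for x
  have inj: "inj_on f (Cn n)" unfolding f_def inj_on_def using y(1) Cn_sub by (meson l_cancel subsetD)
  have disj: "Cn n \<inter> f ` Cn n = {}"
  proof (rule ccontr)
    assume "Cn n \<inter> f ` Cn n \<noteq> {}"
    then obtain x where x: "x \<in> Cn n" "y \<otimes> x \<in> Cn n" unfolding f_def by blast
    have xc: "x \<in> carrier G" using x Cn_sub by blast
    have "y \<otimes> x \<otimes> inv x \<in> Cn n" using Cn_mult[OF n(1) x(2) Cn_inv[OF n(1) x(1)]] .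
    moreover have "y \<otimes> x \<otimes> inv x = y" using xc y(1) by (simp add: m_assoc)
    ultimately show False using yn by simp
  qed
  have sub: "Cn n \<union> f ` Cn n \<subseteq> carrier G" using Cn_sub y(1) unfolding f_def by auto
  have "card (Cn n \<union> f ` Cn n) = card (Cn n) + card (f ` Cn n)"
    using disj finite_subset[OF Cn_sub fin] by (intro card_Un_disjoint) auto
  also have "card (f ` Cn n) = card (Cn n)" using card_image[OF inj] .
  finally have "card (Cn n \<union> f ` Cn n) = 2 * card (Cn n)" by simp
  moreover have "card (Cn n \<union> f ` Cn n) \<le> card (carrier G)" using card_mono[OF fin sub] .
  ultimately show ?thesis by simp
qed

lemma Cn_big:
  assumes n: "n \<in> carrier G" "n \<notin> ZZ"
  shows "card ZZ + 2 \<le> card (Cn n)" "ZZ \<subseteq> Cn n" "n \<in> Cn n"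
proof -
  show ZC: "ZZ \<subseteq> Cn n" unfolding Cn_def using Z_sub Z_comm n(1) by blast
  show nC: "n \<in> Cn n" unfolding Cn_def using n by simp
  have en: "eps \<otimes> n \<in> Cn n" unfolding Cn_def using n eps_carr eps_central by (simp add: m_assoc)
  have enZ: "eps \<otimes> n \<notin> ZZ"
  proof
    assume "eps \<otimes> n \<in> ZZ"
    then have "eps \<otimes> (eps \<otimes> n) \<in> ZZ" using eps_Z Z_mult by blast
    then show False using eps_eps_mult n by simp
  qed
  have ne: "eps \<otimes> n \<noteq> n" using eps_ne eps_carr n(1) by simp
  have fz: "finite ZZ" using Z_sub fin finite_subset by blast
  have "card (ZZ \<union> {n, eps \<otimes> n}) = card ZZ + 2"
    using fz n(2) enZ ne by (simp add: card_insert_if)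
  moreover have "ZZ \<union> {n, eps \<otimes> n} \<subseteq> Cn n" using ZC nC en by blast
  moreover have "finite (Cn n)" using Cn_sub fin finite_subset by blast
  ultimately show "card ZZ + 2 \<le> card (Cn n)" by (metis card_mono)
qed

end

context G2 begin

lemma COUNT:
  assumes nab: "\<exists>a\<in>carrier G. \<exists>b\<in>carrier G. a \<otimes> b \<noteq> b \<otimes> a"
  shows "card (class_semigroup G) \<le> card ZZ + (\<Prod>g \<in> carrier G - ZZ. ord g)"
proof -
  define Phi where "Phi S = (if commset G (set_mset S) then Some (set_mset S - ZZ) else None, seq_prods G S)" for S
  define M where "M = carrier G - ZZ"
  define g0 where "g0 = card (carrier G)"
  define c where "c = card ZZ"
  define h where "h = g0 div 2"
  define D1 where "D1 = (\<lambda>x. (None :: 'a set option, {x, eps \<otimes> x})) ` carrier G"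
  define D2 where "D2 = (\<lambda>z. (Some ({} :: 'a set), {z})) ` ZZ"
  define D3 where "D3 = (\<Union>n\<in>M. (\<lambda>(B, x). (Some (insert n B), {x})) ` (Pow (Cn n - ZZ - {n}) \<times> Cn n))"
  have fZ: "finite ZZ" using finite_subset[OF Z_sub fin] .
  have fM: "finite M" unfolding M_def using fin by simp
  have fC: "finite (Cn n)" for n using finite_subset[OF Cn_sub fin] .
  have fD1: "finite D1" unfolding D1_def using fin by simp
  have fD2: "finite D2" unfolding D2_def using fZ by simp
  have fD3: "finite D3" unfolding D3_def using fM fC by simp
  have img: "Phi ` seqs G \<subseteq> D1 \<union> D2 \<union> D3"
  proof
    fix d assume "d \<in> Phi ` seqs G"
    then obtain S where S: "S \<in> seqs G" and d: "d = Phi S" by blast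
    obtain x where x: "x \<in> seq_prods G S" using prods_ne by blast
    have sc: "set_mset S \<subseteq> carrier G" using seqs_carr[OF S] .
    have xc: "x \<in> carrier G" using prods_carr[OF S x] .
    show "d \<in> D1 \<union> D2 \<union> D3"
    proof (cases "commset G (set_mset S)")
      case False
      have "d = (None, {x, eps \<otimes> x})" unfolding d Phi_def using False KEY_nc[OF sc False x] by simp
      then have "d \<in> D1" unfolding D1_def using xc by blast
      then show ?thesis by blast
    next
      case True
      have pS: "seq_prods G S = {x}" using KEY_comm[OF sc True x] .
      obtain xs where xs: "mset xs = S" "x = prodl G xs" using prods_list[OF x] by blast
      have sxs: "set xs = set_mset S" using xs(1) by auto
      show ?thesis
      proof (cases "set_mset S - ZZ = {}")
        case True2: True
        have "set xs \<subseteq> ZZ" using sxs True2 by blast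
        then have "x \<in> ZZ" using prodl_Z xs(2) by simp
        moreover have "d = (Some {}, {x})" unfolding d Phi_def using True True2 pS by simp
        ultimately have "d \<in> D2" unfolding D2_def by blast
        then show ?thesis by blast
      next
        case False2: False
        then obtain n where n: "n \<in> set_mset S - ZZ" by blast
        have nM: "n \<in> M" unfolding M_def using n sc by blast
        have nc: "n \<in> carrier G" using n sc by blast
        have cn: "\<forall>s\<in>set_mset S. s \<otimes> n = n \<otimes> s" using True n unfolding commset_def by blast
        have xC: "x \<in> Cn n" using prodl_Cn[OF nc] xs(2) sxs sc cn by simp
        define B where "B = set_mset S - ZZ - {n}"
        have BC: "B \<in> Pow (Cn n - ZZ - {n})" unfolding B_def Cn_def using cn sc by auto
        have ins: "insert n B = set_mset S - ZZ" unfolding B_def using n by blast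
        have "d = (\<lambda>(B, x). (Some (insert n B), {x})) (B, x)"
          unfolding d Phi_def using True pS ins by simp
        moreover have "(B, x) \<in> Pow (Cn n - ZZ - {n}) \<times> Cn n" using BC xC by simp
        ultimately have "d \<in> D3" unfolding D3_def using nM by blast
        then show ?thesis by blast
      qed
    qed
  qed
  have fP: "finite (Phi ` seqs G)" using finite_subset[OF img] fD1 fD2 fD3 by simp
  define F where "F d = seq_class G (SOME S. S \<in> seqs G \<and> Phi S = d)" for d
  have clsub: "class_semigroup G \<subseteq> F ` (Phi ` seqs G)"
  proof
    fix y assume "y \<in> class_semigroup G"
    then obtain S where S: "S \<in> seqs G" and y: "y = seq_class G S" unfolding class_semigroup_def by blast
    define S' where "S' = (SOME S'. S' \<in> seqs G \<and> Phi S' = Phi S)"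
    have "S' \<in> seqs G \<and> Phi S' = Phi S" unfolding S'_def by (rule someI[of _ S]) (use S in simp)
    then have S': "S' \<in> seqs G" and ph: "Phi S' = Phi S" by auto
    have "seq_class G S' = seq_class G S"
      using FAC[OF S' S] ph unfolding Phi_def by (simp only: prod.inject)
    then have "y = F (Phi S)" unfolding F_def y S'_def[symmetric] by simp
    then show "y \<in> F ` (Phi ` seqs G)" using S by blast
  qed
  have cls: "card (class_semigroup G) \<le> card (Phi ` seqs G)"
  proof -
    have "card (class_semigroup G) \<le> card (F ` (Phi ` seqs G))"
      using card_mono[OF finite_imageI[OF fP] clsub] .
    also have "\<dots> \<le> card (Phi ` seqs G)" using card_image_le[OF fP] .
    finally show ?thesis .
  qed
  obtain a b where ab: "a \<in> carrier G" "b \<in> carrier G" "a \<otimes> b \<noteq> b \<otimes> a" using nab by blast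
  have aZ: "a \<notin> ZZ" using ab Z_comm by blast
  have Cbig: "c + 2 \<le> card (Cn n)" "2 * card (Cn n) \<le> g0" if "n \<in> M" for n
    using Cn_big(1)[of n] Cn_half[of n] that unfolding M_def c_def g0_def by auto
  have ch: "c + 2 \<le> h" using Cbig[of a] aZ ab(1) unfolding M_def h_def by auto
  have c2: "2 \<le> c"
  proof -
    have "{\<one>, eps} \<subseteq> ZZ" using one_Z eps_Z by blast
    then have "card {\<one>, eps} \<le> c" unfolding c_def using card_mono[OF fZ] by blast
    then show ?thesis using eps_ne by simp
  qed
  have hg: "2 * h \<le> g0" unfolding h_def by simp
  have mM: "card M = g0 - c" unfolding M_def g0_def c_def using card_Diff_subset[OF fZ Z_sub] .
  have trm: "card ((\<lambda>(B, x). (Some (insert n B), {x})) ` (Pow (Cn n - ZZ - {n}) \<times> Cn n)) \<le> 2 ^ (h - c - 1) * h"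
    if nM: "n \<in> M" for n
  proof -
    define k where "k = card (Cn n)"
    have nZ: "n \<in> Cn n - ZZ" using Cn_big(3)[of n] nM unfolding M_def by blast
    have "card (Cn n - ZZ) = k - c" unfolding k_def c_def using card_Diff_subset[OF fZ Cn_big(2)[of n]] nM
      unfolding M_def by blast
    then have cd: "card (Cn n - ZZ - {n}) = k - c - 1" using nZ fC by (simp add: card_Diff_singleton)
    have kh: "k \<le> h" using Cbig(2)[OF nM] unfolding k_def h_def by simp
    have "card ((\<lambda>(B, x). (Some (insert n B), {x})) ` (Pow (Cn n - ZZ - {n}) \<times> Cn n))
          \<le> card (Pow (Cn n - ZZ - {n}) \<times> Cn n)" by (rule card_image_le) (use fC in simp)
    also have "\<dots> = 2 ^ (k - c - 1) * k" using cd fC unfolding k_def by (simp add: card_cartesian_product card_Pow)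
    also have "\<dots> \<le> 2 ^ (h - c - 1) * h" using kh by (intro mult_le_mono power_increasing) auto
    finally show ?thesis .
  qed
  have cD3: "card D3 \<le> (g0 - c) * (2 ^ (h - c - 1) * h)"
  proof -
    have "card D3 \<le> (\<Sum>n\<in>M. card ((\<lambda>(B, x). (Some (insert n B), {x})) ` (Pow (Cn n - ZZ - {n}) \<times> Cn n)))"
      unfolding D3_def using card_UN_le[OF fM] .
    also have "\<dots> \<le> (\<Sum>n\<in>M. 2 ^ (h - c - 1) * h)" using trm by (intro sum_mono) auto
    also have "\<dots> = (g0 - c) * (2 ^ (h - c - 1) * h)" using mM by simp
    finally show ?thesis .
  qed
  have cD1: "card D1 \<le> g0" unfolding D1_def g0_def using card_image_le[OF fin] .
  have cD2: "card D2 \<le> c" unfolding D2_def c_def using card_image_le[OF fZ] .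
  have "card (Phi ` seqs G) \<le> card (D1 \<union> D2 \<union> D3)" using card_mono[OF _ img] fD1 fD2 fD3 by simp
  also have "\<dots> \<le> card D1 + card D2 + card D3" by (meson card_Un_le add_le_mono order_trans le_refl)
  also have "\<dots> \<le> c + (g0 + (g0 - c) * 2 ^ (h - c - 1) * h)" using cD1 cD2 cD3 by (simp add: algebra_simps)
  also have "\<dots> \<le> c + 2 ^ (g0 - c)" using ARITH[OF c2 ch hg] by simp
  also have "\<dots> \<le> c + (\<Prod>g \<in> M. ord g)"
  proof -
    have "(2::nat) ^ (g0 - c) = (\<Prod>g \<in> M. 2)" using mM by simp
    also have "\<dots> \<le> (\<Prod>g \<in> M. ord g)"
    proof (rule prod_mono)
      fix g assume g: "g \<in> M"
      then have gc: "g \<in> carrier G" and g1: "g \<noteq> \<one>" using one_Z unfolding M_def by auto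
      have "ord g \<ge> 1" using ord_ge_1[OF fin gc] .
      moreover have "ord g \<noteq> 1" using ord_eq_1[OF gc] g1 by simp
      ultimately show "0 \<le> (2::nat) \<and> 2 \<le> ord g" by simp
    qed
    finally show ?thesis by simp
  qed
  finally show ?thesis using cls unfolding c_def M_def by simp
qed

end


lemma setup_G2:
  fixes G :: "('a, 'b) monoid_scheme" (structure)
  assumes grp: "group G" and fin: "finite (carrier G)"
    and c2: "card (derived G (carrier G)) = 2"
  shows "\<exists>eps. G2 G eps \<and> (\<exists>a\<in>carrier G. \<exists>b\<in>carrier G. a \<otimes>\<^bsub>G\<^esub> b \<noteq> b \<otimes>\<^bsub>G\<^esub> a)"
proof -
  interpret group G by (rule grp)
  define D where "D = derived G (carrier G)"
  have sub: "subgroup D G" unfolding D_def using derived_is_subgroup by simp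
  have one: "\<one> \<in> D" using subgroup.one_closed[OF sub] .
  have nrm: "D \<lhd> G" unfolding D_def using derived_self_is_normal .
  obtain u v where uv: "D = {u, v}" "u \<noteq> v" using c2 unfolding D_def[symmetric] card_2_iff by blast
  obtain eps where De: "D = {\<one>, eps}" and ne: "eps \<noteq> \<one>"
  proof (cases "u = \<one>")
    case True then show ?thesis using that uv by simp
  next
    case False
    then have "v = \<one>" using uv one by blast
    then show ?thesis using that uv False by (simp add: insert_commute)
  qed
  have ec: "eps \<in> carrier G" using subgroup.subset[OF sub] De by blast
  have inD: "x \<in> D \<Longrightarrow> x = \<one> \<or> x = eps" for x using De by blast
  have sq: "eps \<otimes> eps = \<one>"
  proof -
    have "eps \<otimes> eps \<in> D" using subgroup.m_closed[OF sub] De by blast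
    moreover have "eps \<otimes> eps \<noteq> eps" using ec ne by simp
    ultimately show ?thesis using inD by blast
  qed
  have cent: "eps \<otimes> g = g \<otimes> eps" if g: "g \<in> carrier G" for g
  proof -
    have "g \<otimes> eps \<otimes> inv g \<in> D" using normal.inv_op_closed2[OF nrm g] De by blast
    moreover have "g \<otimes> eps \<otimes> inv g \<noteq> \<one>"
    proof
      assume "g \<otimes> eps \<otimes> inv g = \<one>"
      then have "g \<otimes> eps \<otimes> inv g \<otimes> g = g" using g by simp
      then have "g \<otimes> eps = g" using g ec by (simp add: m_assoc)
      then show False using g ec ne by simp
    qed
    ultimately have "g \<otimes> eps \<otimes> inv g = eps" using inD by blast
    then have "g \<otimes> eps \<otimes> inv g \<otimes> g = eps \<otimes> g" by simp
    then show ?thesis using g ec by (simp add: m_assoc)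
  qed
  have comm_in: "a \<otimes> b \<otimes> inv a \<otimes> inv b \<in> D" if "a \<in> carrier G" "b \<in> carrier G" for a b
    unfolding D_def derived_def using that by (intro generate.incl) blast
  have ceq: "a \<otimes> b \<otimes> inv a \<otimes> inv b \<otimes> (b \<otimes> a) = a \<otimes> b" if ab: "a \<in> carrier G" "b \<in> carrier G" for a b
  proof -
    have 1: "inv b \<otimes> (b \<otimes> a) = a" using ab by (simp add: m_assoc[symmetric])
    have "a \<otimes> b \<otimes> inv a \<otimes> inv b \<otimes> (b \<otimes> a) = (a \<otimes> b \<otimes> inv a) \<otimes> (inv b \<otimes> (b \<otimes> a))"
      using ab by (simp add: m_assoc)
    also have "\<dots> = (a \<otimes> b \<otimes> inv a) \<otimes> a" by (simp only: 1)
    also have "\<dots> = a \<otimes> b" using ab by (simp add: m_assoc)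
    finally show ?thesis .
  qed
  have dich: "a \<otimes> b = b \<otimes> a \<or> a \<otimes> b = eps \<otimes> (b \<otimes> a)" if ab: "a \<in> carrier G" "b \<in> carrier G" for a b
  proof -
    have "a \<otimes> b \<otimes> inv a \<otimes> inv b = \<one> \<or> a \<otimes> b \<otimes> inv a \<otimes> inv b = eps" using inD comm_in[OF ab] by blast
    then show ?thesis
    proof
      assume "a \<otimes> b \<otimes> inv a \<otimes> inv b = \<one>"
      then show ?thesis using ceq[OF ab] ab by simp
    next
      assume "a \<otimes> b \<otimes> inv a \<otimes> inv b = eps"
      then show ?thesis using ceq[OF ab] ab by simp
    qed
  qed
  have g2: "G2 G eps"
  proof (rule G2.intro[OF grp], rule G2_axioms.intro)
    show "eps \<in> carrier G" by (rule ec)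
    show "eps \<noteq> \<one>" by (rule ne)
    show "eps \<otimes> eps = \<one>" by (rule sq)
    show "\<And>g. g \<in> carrier G \<Longrightarrow> eps \<otimes> g = g \<otimes> eps" by (rule cent)
    show "\<And>a b. a \<in> carrier G \<Longrightarrow> b \<in> carrier G \<Longrightarrow> a \<otimes> b = b \<otimes> a \<or> a \<otimes> b = eps \<otimes> (b \<otimes> a)"
      by (rule dich)
    show "finite (carrier G)" by (rule fin)
  qed
  have nab: "\<exists>a\<in>carrier G. \<exists>b\<in>carrier G. a \<otimes> b \<noteq> b \<otimes> a"
  proof (rule ccontr)
    assume "\<not> ?thesis"
    then have allc: "a \<otimes> b = b \<otimes> a" if "a \<in> carrier G" "b \<in> carrier G" for a b using that by blast
    have "derived_set G (carrier G) \<subseteq> {\<one>}"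
    proof
      fix x assume "x \<in> derived_set G (carrier G)"
      then obtain a b where ab: "a \<in> carrier G" "b \<in> carrier G" "x = a \<otimes> b \<otimes> inv a \<otimes> inv b" by blast
      have "x \<otimes> (b \<otimes> a) = b \<otimes> a" using ceq[OF ab(1,2)] allc[OF ab(1,2)] ab(3) by simp
      then have "x = \<one>" using ab by simp
      then show "x \<in> {\<one>}" by simp
    qed
    then have "generate G (derived_set G (carrier G)) \<subseteq> generate G {\<one>}" by (rule mono_generate)
    then have "D \<subseteq> {\<one>}" unfolding D_def derived_def using generate_one by simp
    then have "card D \<le> card {\<one>}" by (intro card_mono) auto
    then have "card D \<le> 1" by simp
    then show False using c2 D_def by simp
  qed
  show ?thesis using g2 nab by blast
qed

theorem theorem3p10:
  fixes G :: "('a, 'b) monoid_scheme"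
  assumes "group G" and "finite (carrier G)"
    and "card (derived G (carrier G)) = 2"
  shows "seminormal (prod_one_seqs G)
    \<and> clifford_semigroup (class_semigroup G) (class_add G)
    \<and> (\<forall>S g. S \<in> seqs G \<and> seq_prods G S = {g} \<longrightarrow>
           (let n = group.ord G g;
                K = (\<lambda>k. seq_class G (repeat_mset k S)) ` {1..n};
                KG = \<lparr>carrier = K, monoid.mult = class_add G, one = seq_class G (repeat_mset n S)\<rparr>
            in semigroup_subgroup (class_semigroup G) (class_add G) K
               \<and> group KG \<and> card K = n
               \<and> (\<forall>x \<in> K. \<exists>k::nat. x = seq_class G S [^]\<^bsub>KG\<^esub> k)))
    \<and> card (class_semigroup G)
           \<le> card (group_center G) + (\<Prod>g \<in> carrier G - group_center G. group.ord G g)"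
proof -
  obtain eps where g2: "G2 G eps" and nab: "\<exists>a\<in>carrier G. \<exists>b\<in>carrier G. a \<otimes>\<^bsub>G\<^esub> b \<noteq> b \<otimes>\<^bsub>G\<^esub> a"
    using setup_G2[OF assms] by blast
  interpret G2 G eps by (rule g2)
  have p2: "\<forall>S g. S \<in> seqs G \<and> seq_prods G S = {g} \<longrightarrow>
           (let n = group.ord G g;
                K = (\<lambda>k. seq_class G (repeat_mset k S)) ` {1..n};
                KG = \<lparr>carrier = K, monoid.mult = class_add G, one = seq_class G (repeat_mset n S)\<rparr>
            in semigroup_subgroup (class_semigroup G) (class_add G) K
               \<and> group KG \<and> card K = n
               \<and> (\<forall>x \<in> K. \<exists>k::nat. x = seq_class G S [^]\<^bsub>KG\<^esub> k))"
  proof (intro allI impI)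
    fix S g assume h: "S \<in> seqs G \<and> seq_prods G S = {g}"
    then have S: "S \<in> seqs G" and sp: "seq_prods G S = {g}" by auto
    have g: "g \<in> seq_prods G S" using sp by simp
    note R = GRP[OF S g]
    show "let n = group.ord G g;
                K = (\<lambda>k. seq_class G (repeat_mset k S)) ` {1..n};
                KG = \<lparr>carrier = K, monoid.mult = class_add G, one = seq_class G (repeat_mset n S)\<rparr>
            in semigroup_subgroup (class_semigroup G) (class_add G) K
               \<and> group KG \<and> card K = n
               \<and> (\<forall>x \<in> K. \<exists>k::nat. x = seq_class G S [^]\<^bsub>KG\<^esub> k)"
      unfolding Let_def
    proof (intro conjI)
      show "semigroup_subgroup (class_semigroup G) (class_add G) ((\<lambda>k. seq_class G (repeat_mset k S)) ` {1..group.ord G g})"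
        unfolding semigroup_subgroup_def by (intro conjI exI) (rule R(1), rule R(2))
    qed (rule R(2), rule CARD[OF S sp], rule R(3))
  qed
  show ?thesis
  proof (intro conjI)
    show "seminormal (prod_one_seqs G)" by (rule SEMI)
    show "clifford_semigroup (class_semigroup G) (class_add G)" by (rule CLIFF)
    show "card (class_semigroup G) \<le> card (group_center G) + (\<Prod>g \<in> carrier G - group_center G. group.ord G g)"
      by (rule COUNT[OF nab])
  qed (rule p2)
qed


end
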